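(* Let $\mathscr{H}^a,\mathscr{H}^b,\mathscr{H}^c$ be nonzero finite-dimensional Hilbert spaces, with identity operators $\hat I^a,\hat I^b,\hat I^c$. Let $\hat Q^a$ be an operator on $\mathscr{H}^a$, $\hat Q^c$ an operator on $\mathscr{H}^c$, $\hat Q^{ab}$ an operator on $\mathscr{H}^a\otimes\mathscr{H}^b$, and $\hat Q^{bc}$ an operator on $\mathscr{H}^b\otimes\mathscr{H}^c$. Suppose that, as operators on $\mathscr{H}^a\otimes\mathscr{H}^b\otimes\mathscr{H}^c$, $$\hat Q^a\otimes\hat I^b\otimes\hat I^c+\hat I^a\otimes\hat Q^{bc}=\hat Q^{ab}\otimes\hat I^c+\hat I^a\otimes\hat I^b\otimes\hat Q^c .$$ Then there exists a unique operator $\hat Q^b$ on $\mathscr{H}^b$ such that simultaneously $$\hat Q^{bc}=\hat Q^b\otimes\hat I^c+\hat I^b\otimes\hat Q^c\qquad\text{and}\qquad \hat Q^{ab}=\hat Q^a\otimes\hat I^b+\hat I^a\otimes\hat Q^b .$$ *)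

theory Defs
  imports "HOL-Analysis.Analysis"
begin

text \<open>A finite-dimensional Hilbert space of dimension n is modelled by a fixed
orthonormal basis indexed by a finite type; operators are square matrices over
that type.  The tensor product of spaces has basis indexed by the product type,
and the tensor product of operators is the Kronecker product.\<close>

definition kron :: "'k::times ^'a::finite^'a \<Rightarrow> 'k^'b::finite^'b \<Rightarrow> 'k^('a \<times> 'b)^('a \<times> 'b)" where
  "kron A B = (\<chi> p. \<chi> q. (A $ fst p $ fst q) * (B $ snd p $ snd q))"

text \<open>Canonical identification of (Ha (x) Hb) (x) Hc with Ha (x) (Hb (x) Hc).\<close>

definition reassoc :: "'k^(('a::finite \<times> 'b::finite) \<times> 'c::finite)^(('a \<times> 'b) \<times> 'c)
    \<Rightarrow> 'k^('a \<times> ('b \<times> 'c))^('a \<times> ('b \<times> 'c))" where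
  "reassoc M = (\<chi> p. \<chi> q.
      M $ ((fst p, fst (snd p)), snd (snd p)) $ ((fst q, fst (snd q)), snd (snd q)))"

end

theory Submission
  imports Defs
begin

theorem proposition1:
  fixes Qa :: "complex^'a::finite^'a"
    and Qc :: "complex^'c::finite^'c"
    and Qab :: "complex^('a \<times> 'b::finite)^('a \<times> 'b)"
    and Qbc :: "complex^('b \<times> 'c)^('b \<times> 'c)"
  assumes "kron Qa (mat 1 :: complex^('b \<times> 'c)^('b \<times> 'c)) + kron (mat 1 :: complex^'a^'a) Qbc
         = reassoc (kron Qab (mat 1 :: complex^'c^'c))
           + kron (mat 1 :: complex^'a^'a) (kron (mat 1 :: complex^'b^'b) Qc)"
  shows "\<exists>!Qb :: complex^'b^'b.
           Qbc = kron Qb (mat 1 :: complex^'c^'c) + kron (mat 1 :: complex^'b^'b) Qc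
         \<and> Qab = kron Qa (mat 1 :: complex^'b^'b) + kron (mat 1 :: complex^'a^'a) Qb"
proof -
  have H: "Qa$a$a' * (if b = b' \<and> c = c' then 1 else 0)
      + (if a = a' then 1 else 0) * Qbc$(b,c)$(b',c')
     = Qab$(a,b)$(a',b') * (if c = c' then 1 else 0)
      + (if a = a' then 1 else 0) * ((if b = b' then 1 else 0) * Qc$c$c')" for a b c a' b' c'
  proof -
    have "(kron Qa (mat 1 :: complex^('b \<times> 'c)^('b \<times> 'c)) + kron (mat 1 :: complex^'a^'a) Qbc) $ (a,(b,c)) $ (a',(b',c'))
       = (reassoc (kron Qab (mat 1 :: complex^'c^'c))
           + kron (mat 1 :: complex^'a^'a) (kron (mat 1 :: complex^'b^'b) Qc)) $ (a,(b,c)) $ (a',(b',c'))"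
      using assms by simp
    then show ?thesis by (simp add: kron_def reassoc_def mat_def)
  qed
  define a0 :: 'a where "a0 = undefined"
  define c0 :: 'c where "c0 = undefined"
  define Qb :: "complex^'b^'b" where
    "Qb = (\<chi> b b'. Qab$(a0,b)$(a0,b') - (if b = b' then Qa$a0$a0 else 0))"
  have E1: "Qab = kron Qa (mat 1 :: complex^'b^'b) + kron (mat 1 :: complex^'a^'a) Qb"
  proof -
    have R: "Qab$(a,b)$(a',b') = Qa$a$a' * (if b = b' then 1 else 0)
       + (if a = a' then 1 else 0) * (Qbc$(b,c0)$(b',c0) - (if b = b' then Qc$c0$c0 else 0))"
      for a b a' b' using H[where a=a and b=b and c=c0 and a'=a' and b'=b' and c'=c0] by (auto split: if_splits simp: algebra_simps)
    show ?thesis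
      unfolding vec_eq_iff
      by (auto simp: kron_def mat_def Qb_def R)
  qed
  have E2: "Qbc = kron Qb (mat 1 :: complex^'c^'c) + kron (mat 1 :: complex^'b^'b) Qc"
  proof -
    have R: "Qbc$(b,c)$(b',c') = Qab$(a0,b)$(a0,b') * (if c = c' then 1 else 0)
       + (if b = b' then 1 else 0) * Qc$c$c' - Qa$a0$a0 * (if b = b' \<and> c = c' then 1 else 0)"
      for b c b' c' using H[where a=a0 and b=b and c=c and a'=a0 and b'=b' and c'=c'] by (auto split: if_splits simp: algebra_simps)
    show ?thesis
      unfolding vec_eq_iff
      by (auto simp: kron_def mat_def Qb_def R algebra_simps)
  qed
  show ?thesis
  proof (rule ex1I[of _ Qb])
    show "Qbc = kron Qb (mat 1) + kron (mat 1) Qc \<and> Qab = kron Qa (mat 1) + kron (mat 1) Qb"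
      using E1 E2 by simp
  next
    fix Q :: "complex^'b^'b"
    assume "Qbc = kron Q (mat 1) + kron (mat 1) Qc \<and> Qab = kron Qa (mat 1) + kron (mat 1) Q"
    then have "Qab$(a0,b)$(a0,b') = (kron Qa (mat 1) + kron (mat 1) Q) $(a0,b)$(a0,b')" for b b'
      by simp
    then show "Q = Qb"
      unfolding vec_eq_iff by (auto simp: kron_def mat_def Qb_def)
  qed
qed

end
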